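(* Let $\alpha=(\alpha_1,\dots,\alpha_n)$ be a vector of positive integers and let $\varphi$ be a smooth function on $\mathbb{R}^n$ with $\operatorname{supp}\varphi\subset[-1,1]^n$. Consider $$I(\lambda)=\int_{\mathbb{R}^n}e^{i\lambda x_1^{\alpha_1}\cdots x_n^{\alpha_n}}\varphi(x_1,\dots,x_n)\,\mathrm{d}x_1\cdots\mathrm{d}x_n ,$$ and set $d=\max_j\alpha_j$ and $M=\#\{j:\alpha_j=d\}$. Then there is a constant $C_\varphi$ such that, for all sufficiently large $\lambda$, $$|I(\lambda)|\le C_\varphi\,\lambda^{-1/d}\ln^{M-1}\lambda .$$
   Context: The constant $C_\varphi$ depends on $\varphi$ and $\alpha$ but not on $\lambda$. *)

theory Defs
  imports "HOL-Analysis.Analysis"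
begin

fun iter_dderiv :: "'a::real_normed_vector list \<Rightarrow> ('a \<Rightarrow> 'b::real_normed_vector) \<Rightarrow> 'a \<Rightarrow> 'b" where
  "iter_dderiv [] f = f"
| "iter_dderiv (v # vs) f = (\<lambda>x. frechet_derivative (iter_dderiv vs f) (at x) v)"

definition smooth :: "('a::real_normed_vector \<Rightarrow> 'b::real_normed_vector) \<Rightarrow> bool" where
  "smooth f \<longleftrightarrow> (\<forall>vs. \<forall>x. iter_dderiv vs f differentiable (at x))"

definition osc_integral :: "('n::finite \<Rightarrow> nat) \<Rightarrow> (real^'n \<Rightarrow> complex) \<Rightarrow> real \<Rightarrow> complex" where
  "osc_integral \<alpha> \<phi> lam =
     integral UNIV (\<lambda>x. exp (\<i> * complex_of_real (lam * (\<Prod>j\<in>UNIV. (x $ j) ^ \<alpha> j))) * \<phi> x)"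

end

theory Submission
  imports Defs "HOL-Analysis.Analysis"
begin


lemma deriv_rinv:
  fixes d :: nat assumes "t > 0"
  shows "((\<lambda>t::real. 1 / t^(d-1)) has_real_derivative (- real (d-1) / t^d)) (at t)"
proof (cases d)
  case 0 then show ?thesis by simp
next
  case (Suc m)
  have 1: "((\<lambda>t::real. inverse (t^m)) has_real_derivative (- (real m * t^(m-1)) / (t^m)^2)) (at t)"
    using assms by (auto intro!: derivative_eq_intros simp: field_simps power2_eq_square)
  have 2: "- (real m * t^(m-1)) / (t^m)^2 = - real m / t^(Suc m)"
  proof (cases m)
    case 0 then show ?thesis by simp
  next
    case (Suc k) then show ?thesis using assms by (simp add: field_simps power2_eq_square)
  qed
  have "((\<lambda>t::real. inverse (t^m)) has_real_derivative (- real m / t^(Suc m))) (at t)"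
    using 1 2 by (rule DERIV_cong)
  then show ?thesis using Suc by (simp only: diff_Suc_1 inverse_eq_divide)
qed

lemma dPhi:
  fixes \<mu> :: real
  shows "((\<lambda>t. exp (\<i> * complex_of_real (\<mu> * t^d))) has_vector_derivative
           (\<i> * complex_of_real (\<mu> * (real d * t^(d-1)))) * exp (\<i> * complex_of_real (\<mu> * t^d))) (at t)"
proof -
  have "((\<lambda>t. \<mu> * t^d) has_real_derivative \<mu> * (real d * t^(d-1))) (at t)"
    by (auto intro!: derivative_eq_intros)
  then have "((\<lambda>t. \<i> * complex_of_real (\<mu> * t^d)) has_vector_derivative \<i> * complex_of_real (\<mu> * (real d * t^(d-1)))) (at t)"
    by (intro has_vector_derivative_mult_right has_vector_derivative_of_real)
  from field_vector_diff_chain_at[OF this DERIV_exp]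
  show ?thesis by (simp add: o_def)
qed


lemma half_estimate:
  fixes \<psi> \<psi>' :: "real \<Rightarrow> complex" and d :: nat and \<mu> \<delta> A :: real
  assumes d: "d \<ge> 1" and mu: "\<mu> \<noteq> 0" and dpos: "0 < \<delta>" and dle: "\<delta> \<le> 1"
    and md: "\<bar>\<mu>\<bar> * \<delta>^d = 1"
    and der: "\<And>t. t \<in> {\<delta>..1} \<Longrightarrow> (\<psi> has_vector_derivative \<psi>' t) (at t)"
    and cont: "continuous_on {\<delta>..1} \<psi>'"
    and bd: "\<And>t. t \<in> {\<delta>..1} \<Longrightarrow> norm (\<psi> t) \<le> A"
    and bd': "\<And>t. t \<in> {\<delta>..1} \<Longrightarrow> norm (\<psi>' t) \<le> A"
  shows "norm (integral {\<delta>..1} (\<lambda>t. exp (\<i> * complex_of_real (\<mu> * t^d)) * \<psi> t)) \<le> 4 * A * \<delta>"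
proof -
  define K :: complex where "K = 1 / (\<i> * complex_of_real (\<mu> * real d))"
  define r where "r = (\<lambda>t::real. 1 / t^(d-1))"
  define r' where "r' = (\<lambda>t::real. - real (d-1) / t^d)"
  define \<Phi> where "\<Phi> = (\<lambda>t::real. exp (\<i> * complex_of_real (\<mu> * t^d)))"
  define h where "h = (\<lambda>t. \<psi> t * K * complex_of_real (r t))"
  define h' where "h' = (\<lambda>t. \<psi>' t * K * complex_of_real (r t) + \<psi> t * K * complex_of_real (r' t))"
  define F where "F = (\<lambda>t. \<Phi> t * h t)"
  have A0: "0 \<le> A" using bd[of 1] dle by (smt (verit, best) atLeastAtMost_iff norm_ge_zero)
  have dr: "(r has_real_derivative r' t) (at t)" if "t > 0" for t
    unfolding r_def r'_def using deriv_rinv[OF that] .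
  have nK: "norm K = 1 / (\<bar>\<mu>\<bar> * real d)"
    unfolding K_def by (simp add: norm_divide norm_mult abs_mult)
  have nK': "norm K \<le> 1 / \<bar>\<mu>\<bar>"
    unfolding nK using d mu by (simp add: field_simps)
  have key: "\<i> * complex_of_real (\<mu> * (real d * t^(d-1))) * K * complex_of_real (r t) = 1" if "t > 0" for t
    using that d mu unfolding K_def r_def by (simp add: field_simps)
  have dF: "(F has_vector_derivative (\<Phi> t * \<psi> t + \<Phi> t * h' t)) (at t)" if "t \<in> {\<delta>..1}" for t
  proof -
    have t0: "t > 0" using that dpos by auto
    have dh: "(h has_vector_derivative h' t) (at t)"
      unfolding h_def h'_def
      by (auto intro!: derivative_eq_intros der[OF that] dr[OF t0])
    have "(F has_vector_derivative (\<Phi> t * h' t + (\<i> * complex_of_real (\<mu> * (real d * t^(d-1))) * \<Phi> t) * h t)) (at t)"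
    proof -
      have dP: "(\<Phi> has_vector_derivative (\<i> * complex_of_real (\<mu> * (real d * t^(d-1)))) * \<Phi> t) (at t)"
        unfolding \<Phi>_def by (rule dPhi)
      show ?thesis unfolding F_def using has_vector_derivative_mult[OF dP dh] .
    qed
    moreover have "(\<i> * complex_of_real (\<mu> * (real d * t^(d-1))) * \<Phi> t) * h t = \<Phi> t * \<psi> t"
    proof -
      have "(\<i> * complex_of_real (\<mu> * (real d * t^(d-1))) * \<Phi> t) * h t
         = \<Phi> t * \<psi> t * (\<i> * complex_of_real (\<mu> * (real d * t^(d-1))) * K * complex_of_real (r t))"
        unfolding h_def by (simp add: ac_simps)
      then show ?thesis by (simp only: key[OF t0] mult_1_right)
    qed
    ultimately show ?thesis by (metis add.commute)
  qed
  have t0: "t > 0" if "t \<in> {\<delta>..1}" for t using that dpos by auto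
  have contpsi: "continuous_on {\<delta>..1} \<psi>"
    by (rule continuous_on_vector_derivative, rule has_vector_derivative_at_within, rule der)
  have contr: "continuous_on {\<delta>..1} r" unfolding r_def
    by (intro continuous_intros) (use dpos in auto)
  have contr': "continuous_on {\<delta>..1} r'" unfolding r'_def
    by (intro continuous_intros) (use dpos in auto)
  have contPhi: "continuous_on {\<delta>..1} \<Phi>" unfolding \<Phi>_def by (intro continuous_intros)
  have conth: "continuous_on {\<delta>..1} (\<lambda>t. \<Phi> t * h' t)" unfolding h'_def
    by (intro continuous_intros contpsi cont contr contr' contPhi continuous_on_of_real)
  have int2: "(\<lambda>t. \<Phi> t * h' t) integrable_on {\<delta>..1}"
    using conth integrable_continuous_real by blast
  have ftc: "((\<lambda>t. \<Phi> t * \<psi> t + \<Phi> t * h' t) has_integral F 1 - F \<delta>) {\<delta>..1}"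
  proof (rule fundamental_theorem_of_calculus)
    show "\<delta> \<le> 1" by fact
    fix t assume "t \<in> {\<delta>..1}"
    then show "(F has_vector_derivative (\<Phi> t * \<psi> t + \<Phi> t * h' t)) (at t within {\<delta>..1})"
      by (rule has_vector_derivative_at_within[OF dF])
  qed
  have main: "((\<lambda>t. \<Phi> t * \<psi> t) has_integral (F 1 - F \<delta> - integral {\<delta>..1} (\<lambda>t. \<Phi> t * h' t))) {\<delta>..1}"
    using has_integral_diff[OF ftc integrable_integral[OF int2]] by simp
  define Q where "Q = 1 / (\<bar>\<mu>\<bar> * \<delta>^(d-1))"
  have Qd: "Q = \<delta>"
  proof -
    have "\<delta>^d = \<delta>^(d-1) * \<delta>" using d by (cases d) auto
    then show ?thesis unfolding Q_def using md dpos mu by (simp add: field_simps)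
  qed
  have rle: "0 \<le> r t \<and> r t \<le> 1 / \<delta>^(d-1)" if "t \<in> {\<delta>..1}" for t
    using that dpos unfolding r_def by (auto intro!: divide_left_mono power_mono mult_pos_pos)
  have nPhi: "norm (\<Phi> t) = 1" for t unfolding \<Phi>_def by (simp add: norm_exp_i_times)
  have nF: "norm (F t) \<le> A * Q" if "t \<in> {\<delta>..1}" for t
  proof -
    have "norm (F t) = norm (\<psi> t) * norm K * r t" unfolding F_def h_def
      using rle[OF that] by (simp add: norm_mult nPhi)
    also have "\<dots> \<le> A * (1/\<bar>\<mu>\<bar>) * (1 / \<delta>^(d-1))"
      using rle[OF that] bd[OF that] nK' A0 by (intro mult_mono) auto
    finally show ?thesis unfolding Q_def by simp
  qed
  define g where "g = (\<lambda>t. A / \<bar>\<mu>\<bar> * (1/\<delta>^(d-1) - r' t))"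
  define G where "G = (\<lambda>t. A / \<bar>\<mu>\<bar> * (t/\<delta>^(d-1) - r t))"
  have gint: "(g has_integral G 1 - G \<delta>) {\<delta>..1}"
  proof (rule fundamental_theorem_of_calculus)
    show "\<delta> \<le> 1" by fact
    fix t assume "t \<in> {\<delta>..1}"
    then have "(G has_real_derivative g t) (at t)"
      unfolding G_def g_def using \<open>t \<in> {\<delta>..1}\<close>
      by (intro DERIV_cmult DERIV_diff DERIV_cdivide DERIV_ident dr[OF t0])
    then show "(G has_vector_derivative g t) (at t within {\<delta>..1})"
      by (simp add: has_real_derivative_iff_has_vector_derivative has_vector_derivative_at_within)
  qed
  have Gle: "G 1 - G \<delta> \<le> 2 * A * Q"
  proof -
    have "G 1 - G \<delta> = A / \<bar>\<mu>\<bar> * (1/\<delta>^(d-1) - r 1 - \<delta>/\<delta>^(d-1) + r \<delta>)"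
      unfolding G_def by (simp add: algebra_simps)
    also have "\<dots> \<le> A / \<bar>\<mu>\<bar> * (2/\<delta>^(d-1))"
    proof (rule mult_left_mono)
      have nn: "0 \<le> \<delta> / \<delta>^(d-1)" using dpos by simp
      have "r 1 = 1" "r \<delta> = 1/\<delta>^(d-1)" by (simp_all add: r_def)
      moreover have "2/\<delta>^(d-1) = 1/\<delta>^(d-1) + 1/\<delta>^(d-1)" by simp
      ultimately show "1/\<delta>^(d-1) - r 1 - \<delta>/\<delta>^(d-1) + r \<delta> \<le> 2/\<delta>^(d-1)" using nn by linarith
      show "0 \<le> A / \<bar>\<mu>\<bar>" using A0 by simp
    qed
    finally show ?thesis unfolding Q_def by (simp add: mult.commute)
  qed
  have nh': "norm (\<Phi> t * h' t) \<le> g t" if "t \<in> {\<delta>..1}" for t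
  proof -
    have r'0: "r' t \<le> 0" unfolding r'_def using t0[OF that] by auto
    have "norm (\<Phi> t * h' t) = norm (h' t)" by (simp add: norm_mult nPhi)
    also have "\<dots> \<le> norm (\<psi>' t) * norm K * r t + norm (\<psi> t) * norm K * \<bar>r' t\<bar>"
      unfolding h'_def using rle[OF that] norm_triangle_ineq[of "\<psi>' t * K * complex_of_real (r t)" "\<psi> t * K * complex_of_real (r' t)"]
      by (simp add: norm_mult)
    also have "\<dots> \<le> A * (1/\<bar>\<mu>\<bar>) * (1 / \<delta>^(d-1)) + A * (1/\<bar>\<mu>\<bar>) * \<bar>r' t\<bar>"
      using rle[OF that] bd[OF that] bd'[OF that] nK' A0 by (intro add_mono mult_mono) auto
    also have "\<dots> = g t" unfolding g_def using r'0 mu dpos by (simp add: field_simps)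
    finally show ?thesis .
  qed
  have "norm (integral {\<delta>..1} (\<lambda>t. \<Phi> t * h' t)) \<le> integral {\<delta>..1} g"
    by (rule Henstock_Kurzweil_Integration.integral_norm_bound_integral[OF int2])
       (use gint nh' in \<open>auto simp: has_integral_integrable\<close>)
  also have "\<dots> \<le> 2 * A * Q" using gint Gle by (simp add: integral_unique)
  finally have n2: "norm (integral {\<delta>..1} (\<lambda>t. \<Phi> t * h' t)) \<le> 2 * A * Q" .
  have "norm (integral {\<delta>..1} (\<lambda>t. \<Phi> t * \<psi> t)) = norm (F 1 - F \<delta> - integral {\<delta>..1} (\<lambda>t. \<Phi> t * h' t))"
    using main by (simp add: integral_unique)
  also have "\<dots> \<le> norm (F 1) + norm (F \<delta>) + norm (integral {\<delta>..1} (\<lambda>t. \<Phi> t * h' t))"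
    by (smt (verit) norm_triangle_ineq4 norm_triangle_ineq)
  also have "\<dots> \<le> A * Q + A * Q + 2 * A * Q"
    using nF[of 1] nF[of \<delta>] n2 dle dpos by (intro add_mono) auto
  finally show ?thesis unfolding Qd \<Phi>_def by simp
qed

lemma bound_const_int:
  fixes f :: "real \<Rightarrow> complex"
  assumes "f integrable_on {a..b}" "a \<le> b" "\<And>t. t \<in> {a..b} \<Longrightarrow> norm (f t) \<le> A"
  shows "norm (integral {a..b} f) \<le> A * (b - a)"
proof -
  have "norm (integral {a..b} f) \<le> integral {a..b} (\<lambda>_. A)"
    by (rule Henstock_Kurzweil_Integration.integral_norm_bound_integral) (use assms in auto)
  then show ?thesis using assms(2) by (simp add: mult.commute)
qed

lemma full_estimate:
  fixes \<psi> \<psi>' :: "real \<Rightarrow> complex" and d :: nat and \<mu> \<theta> A :: real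
  assumes d: "d \<ge> 1" and mu: "\<mu> \<noteq> 0" and th: "0 \<le> \<theta>" "\<theta> \<le> 1"
    and der: "\<And>t. t \<in> {-1..1} \<Longrightarrow> (\<psi> has_vector_derivative \<psi>' t) (at t)"
    and cont: "continuous_on {-1..1} \<psi>'"
    and bd: "\<And>t. t \<in> {-1..1} \<Longrightarrow> norm (\<psi> t) \<le> A"
    and bd': "\<And>t. t \<in> {-1..1} \<Longrightarrow> norm (\<psi>' t) \<le> A"
  shows "norm (integral {-1..1} (\<lambda>t. exp (\<i> * complex_of_real (\<mu> * t^d)) * \<psi> t))
           \<le> 10 * A * \<bar>\<mu>\<bar> powr (- \<theta> / real d)"
proof -
  define f where "f = (\<lambda>t. exp (\<i> * complex_of_real (\<mu> * t^d)) * \<psi> t)"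
  have A0: "0 \<le> A" using bd[of 1] by (smt (verit, best) atLeastAtMost_iff norm_ge_zero)
  have contpsi: "continuous_on {-1..1} \<psi>"
    by (rule continuous_on_vector_derivative, rule has_vector_derivative_at_within, rule der)
  have contf: "continuous_on {-1..1} f" unfolding f_def
    by (intro continuous_intros contpsi)
  have intf: "f integrable_on {a..b}" if "-1 \<le> a" "b \<le> 1" for a b
    by (rule integrable_continuous_real) (rule continuous_on_subset[OF contf], use that in auto)
  have nf: "norm (f t) \<le> A" if "t \<in> {-1..1}" for t
    using bd[OF that] unfolding f_def by (simp add: norm_mult norm_exp_i_times)
  have mpos: "0 < \<bar>\<mu>\<bar>" using mu by simp
  show ?thesis
  proof (cases "\<bar>\<mu>\<bar> < 1")
    case True
    have "\<bar>\<mu>\<bar> powr (\<theta> / real d) \<le> 1" using True th by (intro powr_le1) auto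
    moreover have "0 < \<bar>\<mu>\<bar> powr (\<theta> / real d)" using mpos by simp
    ultimately have ge1: "1 \<le> \<bar>\<mu>\<bar> powr (- \<theta> / real d)"
      by (simp add: powr_minus_divide[of _ "\<theta> / real d", simplified] divide_simps)
    have "norm (integral {-1..1} f) \<le> A * (1 - (-1))"
      by (rule bound_const_int[OF intf]) (use nf in auto)
    also have "\<dots> \<le> 10 * A * \<bar>\<mu>\<bar> powr (- \<theta> / real d)"
    proof -
      have "A * 2 \<le> A * (10 * \<bar>\<mu>\<bar> powr (- \<theta> / real d))" using ge1 A0 by (intro mult_left_mono) auto
      then show ?thesis by (simp add: algebra_simps)
    qed
    finally show ?thesis unfolding f_def .
  next
    case False
    define \<delta> where "\<delta> = \<bar>\<mu>\<bar> powr (- 1 / real d)"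
    have dpos: "0 < \<delta>" unfolding \<delta>_def using mpos by simp
    have "1 \<le> \<bar>\<mu>\<bar> powr (1 / real d)" using False by (intro ge_one_powr_ge_zero) auto
    then have dle: "\<delta> \<le> 1" unfolding \<delta>_def
      by (simp add: powr_minus_divide[of _ "1 / real d", simplified] divide_simps)
    have dd: "\<delta> ^ d = 1 / \<bar>\<mu>\<bar>"
    proof -
      have "\<delta> ^ d = \<delta> powr (real d)" using dpos by (simp add: powr_realpow)
      also have "\<dots> = \<bar>\<mu>\<bar> powr (- 1)" unfolding \<delta>_def powr_powr using d by simp
      finally show ?thesis by (simp add: powr_minus_divide)
    qed
    have md: "\<bar>\<mu>\<bar> * \<delta>^d = 1" using dd mpos by simp
    have sub: "{\<delta>..1} \<subseteq> {-1..1}" using dpos by auto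
    have R: "norm (integral {\<delta>..1} f) \<le> 4 * A * \<delta>" unfolding f_def
      by (rule half_estimate[where \<psi>'=\<psi>', OF d mu dpos dle md]) (use sub der cont bd bd' in \<open>auto intro: continuous_on_subset\<close>)
    have M: "norm (integral {-\<delta>..\<delta>} f) \<le> A * (\<delta> - - \<delta>)"
      by (rule bound_const_int[OF intf]) (use dle dpos nf in auto)
    define \<mu>2 where "\<mu>2 = (-1)^d * \<mu>"
    have mu2: "\<mu>2 \<noteq> 0" "\<bar>\<mu>2\<bar> * \<delta>^d = 1" unfolding \<mu>2_def using mu md by (auto simp: abs_mult)
    have fm: "f (-t) = exp (\<i> * complex_of_real (\<mu>2 * t^d)) * \<psi> (-t)" for t
      unfolding f_def \<mu>2_def by (simp add: power_minus[of t d] ac_simps)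
    have derm: "((\<lambda>t. \<psi> (-t)) has_vector_derivative - \<psi>' (-t)) (at t)" if "t \<in> {\<delta>..1}" for t
    proof -
      have "(uminus has_vector_derivative (-1::real)) (at t)"
        by (auto intro!: derivative_eq_intros)
      from vector_diff_chain_at[OF this der[of "-t"]] that sub
      show ?thesis by (auto simp: o_def)
    qed
    have contm: "continuous_on {\<delta>..1} (\<lambda>t. - \<psi>' (-t))"
      by (intro continuous_intros continuous_on_compose2[OF cont]) (use dpos in auto)
    have L0: "norm (integral {\<delta>..1} (\<lambda>t. exp (\<i> * complex_of_real (\<mu>2 * t^d)) * \<psi> (-t))) \<le> 4 * A * \<delta>"
      by (rule half_estimate[OF d mu2(1) dpos dle mu2(2) derm contm]) (use sub bd bd' in auto)
    have "((\<lambda>t. f (-t)) has_integral integral {-1..-\<delta>} f) {\<delta>..1}"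
      using has_integral_reflect_real[of "\<lambda>t. f (-t)" "integral {-1..-\<delta>} f" 1 \<delta>]
        integrable_integral[OF intf[of "-1" "-\<delta>"]] dpos by simp
    then have "integral {-1..-\<delta>} f = integral {\<delta>..1} (\<lambda>t. exp (\<i> * complex_of_real (\<mu>2 * t^d)) * \<psi> (-t))"
      unfolding fm by (simp add: integral_unique)
    with L0 have L: "norm (integral {-1..-\<delta>} f) \<le> 4 * A * \<delta>" by simp
    have "integral {-1..1} f = integral {-1..-\<delta>} f + (integral {-\<delta>..\<delta>} f + integral {\<delta>..1} f)"
      using Henstock_Kurzweil_Integration.integral_combine[where a="-1" and c="-\<delta>" and b=1 and f=f]
        Henstock_Kurzweil_Integration.integral_combine[where a="-\<delta>" and c="\<delta>" and b=1 and f=f] intf dpos dle by auto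
    then have "norm (integral {-1..1} f) \<le> norm (integral {-1..-\<delta>} f) + (norm (integral {-\<delta>..\<delta>} f) + norm (integral {\<delta>..1} f))"
      by (simp only:) (rule order_trans[OF norm_triangle_ineq add_left_mono[OF norm_triangle_ineq]])
    then have "norm (integral {-1..1} f) \<le> 4 * A * \<delta> + A * (\<delta> - - \<delta>) + 4 * A * \<delta>"
      using L M R norm_triangle_ineq[of "integral {-1..-\<delta>} f" "integral {-\<delta>..\<delta>} f + integral {\<delta>..1} f"]
        norm_triangle_ineq[of "integral {-\<delta>..\<delta>} f" "integral {\<delta>..1} f"] by linarith
    also have "\<dots> = 10 * A * \<delta>" by simp
    also have "\<dots> \<le> 10 * A * \<bar>\<mu>\<bar> powr (- \<theta> / real d)"
      unfolding \<delta>_def using A0 False th d by (intro mult_left_mono powr_mono) (auto simp: divide_simps)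
    finally show ?thesis unfolding f_def .
  qed
qed



lemma smooth_facts:
  fixes \<phi> :: "'a::real_normed_vector \<Rightarrow> 'b::real_normed_vector"
  assumes "smooth \<phi>"
  shows "continuous_on UNIV \<phi>"
    and "\<And>y. (\<phi> has_derivative frechet_derivative \<phi> (at y)) (at y)"
    and "continuous_on UNIV (iter_dderiv [u] \<phi>)"
    and "\<And>y. iter_dderiv [u] \<phi> y = frechet_derivative \<phi> (at y) u"
proof -
  have d0: "\<phi> differentiable (at y)" for y
    using assms unfolding smooth_def by (metis iter_dderiv.simps(1))
  show "continuous_on UNIV \<phi>"
    using d0 by (simp add: differentiable_imp_continuous_within continuous_at_imp_continuous_on)
  show "(\<phi> has_derivative frechet_derivative \<phi> (at y)) (at y)" for y
    using d0 frechet_derivative_works by blast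
  have "iter_dderiv [u] \<phi> differentiable (at y)" for y
    using assms unfolding smooth_def by blast
  then show "continuous_on UNIV (iter_dderiv [u] \<phi>)"
    by (simp add: differentiable_imp_continuous_within continuous_at_imp_continuous_on)
  show "iter_dderiv [u] \<phi> y = frechet_derivative \<phi> (at y) u" for y by simp
qed

lemma line_deriv:
  fixes \<phi> :: "'a::real_normed_vector \<Rightarrow> 'b::real_normed_vector"
  assumes "smooth \<phi>"
  shows "((\<lambda>t. \<phi> (v + t *\<^sub>R u)) has_vector_derivative iter_dderiv [u] \<phi> (v + t *\<^sub>R u)) (at t)"
proof -
  have l: "((\<lambda>t. v + t *\<^sub>R u) has_derivative (\<lambda>h. h *\<^sub>R u)) (at t)"
    by (auto intro!: derivative_eq_intros)
  have d: "(\<phi> has_derivative frechet_derivative \<phi> (at (v + t *\<^sub>R u))) (at (v + t *\<^sub>R u))"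
    using smooth_facts(2)[OF assms] .
  have lin: "linear (frechet_derivative \<phi> (at (v + t *\<^sub>R u)))"
    using d has_derivative_linear by blast
  from diff_chain_at[OF l d]
  have "((\<lambda>t. \<phi> (v + t *\<^sub>R u)) has_derivative (\<lambda>h. frechet_derivative \<phi> (at (v + t *\<^sub>R u)) (h *\<^sub>R u))) (at t)"
    by (simp add: o_def)
  moreover have "(\<lambda>h. frechet_derivative \<phi> (at (v + t *\<^sub>R u)) (h *\<^sub>R u)) = (\<lambda>h. h *\<^sub>R frechet_derivative \<phi> (at (v + t *\<^sub>R u)) u)"
    using lin by (simp add: linear_scale)
  ultimately show ?thesis
    by (simp add: has_vector_derivative_def smooth_facts(4)[OF assms])
qed

definition gfun :: "real \<Rightarrow> real \<Rightarrow> ennreal" where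
  "gfun \<beta> t = (if t = 0 then top else if \<bar>t\<bar> \<le> 1 then ennreal (\<bar>t\<bar> powr (- \<beta>)) else 0)"

lemma gfun_measurable[measurable]: "gfun \<beta> \<in> borel_measurable borel"
  unfolding gfun_def by measurable

lemma gfun_integral:
  assumes "0 \<le> \<beta>" "\<beta> < 1"
  shows "(\<integral>\<^sup>+ t. gfun \<beta> t \<partial>lborel) = ennreal (2 / (1 - \<beta>))"
proof -
  have h0: "((\<lambda>t. \<bar>t\<bar> powr (- \<beta>)) has_integral (1 / (1 - \<beta>))) {0..1}"
  proof -
    have "((\<lambda>t. t powr (- \<beta>)) has_integral (1 powr (- \<beta> + 1) / (- \<beta> + 1))) {0..1}"
      using assms by (intro has_integral_powr_from_0) auto
    then have "((\<lambda>t. t powr (- \<beta>)) has_integral (1 / (1 - \<beta>))) {0..1}" by simp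
    then show ?thesis by (rule has_integral_eq[rotated]) auto
  qed
  have h1: "((\<lambda>t. \<bar>t\<bar> powr (- \<beta>)) has_integral (1 / (1 - \<beta>))) {-1..0}"
    using iffD2[OF has_integral_reflect_real[of "\<lambda>t. \<bar>t\<bar> powr (- \<beta>)" "1 / (1 - \<beta>)" 1 0] h0]
    by (simp del: has_integral_reflect_real)
  have h: "((\<lambda>t. \<bar>t\<bar> powr (- \<beta>)) has_integral (2 / (1 - \<beta>))) {-1..1}"
    using has_integral_combine[OF _ _ h1 h0] by simp
  have "(\<integral>\<^sup>+ t. gfun \<beta> t \<partial>lborel) = (\<integral>\<^sup>+ t. ennreal (indicator {-1..1} t * (\<bar>t\<bar> powr (- \<beta>))) \<partial>lborel)"
  proof (rule nn_integral_cong_AE)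
    show "AE t in lborel. gfun \<beta> t = ennreal (indicator {-1..1} t * (\<bar>t\<bar> powr (- \<beta>)))"
      using AE_lborel_singleton[of 0] by eventually_elim (auto simp: gfun_def indicator_def)
  qed
  also have "\<dots> = ennreal (2 / (1 - \<beta>))"
    by (rule nn_integral_has_integral_lebesgue[OF _ h]) simp
  finally show ?thesis .
qed



lemma Basis_cart_eq: "(Basis :: (real^'n) set) = range (\<lambda>j. axis j 1)"
  unfolding Basis_vec_def by auto

lemma sum_basis_nth:
  fixes y :: "real^'n \<Rightarrow> real"
  shows "(\<Sum>b\<in>Basis. y b *\<^sub>R b) $ j = y (axis j 1)"
proof -
  have "(\<Sum>b\<in>Basis. y b *\<^sub>R b) $ j = (\<Sum>b\<in>Basis. y b *\<^sub>R b) \<bullet> axis j 1"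
    by (rule cart_eq_inner_axis)
  also have "\<dots> = (\<Sum>b\<in>Basis. y b * (b \<bullet> axis j 1))"
    by (simp add: inner_sum_left)
  also have "\<dots> = (\<Sum>b\<in>Basis. if b = axis j 1 then y b else 0)"
    by (rule sum.cong) (auto simp: inner_Basis)
  also have "\<dots> = y (axis j 1)" by simp
  finally show ?thesis .
qed

lemma coord_update:
  fixes x :: "real^'n \<Rightarrow> real"
  shows "(\<Sum>b\<in>Basis. (x(axis k 1 := t)) b *\<^sub>R b) $ j = (if j = k then t else x (axis j 1))"
  by (simp only: sum_basis_nth) (simp add: axis_eq_axis)

lemma line_eq:
  fixes x :: "real^'n \<Rightarrow> real"
  shows "(\<Sum>b\<in>Basis. (x(axis k 1 := t)) b *\<^sub>R b) = (\<Sum>b\<in>Basis. (x(axis k 1 := 0)) b *\<^sub>R b) + t *\<^sub>R axis k 1"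
  unfolding vec_eq_iff vector_add_component vector_scaleR_component coord_update by (simp add: axis_def)

lemma gfun_nz: "\<bar>s\<bar> \<le> 1 \<Longrightarrow> gfun \<beta> s \<noteq> 0"
  unfolding gfun_def by auto

lemma abs_prod_powr:
  fixes z :: "'n \<Rightarrow> real" and S :: "'n set"
  assumes "finite S" "\<And>j. j \<in> S \<Longrightarrow> z j \<noteq> 0" "lam > 0"
  shows "\<bar>lam * (\<Prod>j\<in>S. z j ^ a j)\<bar> powr s = lam powr s * (\<Prod>j\<in>S. \<bar>z j\<bar> powr (real (a j) * s))"
proof -
  have e1: "\<bar>lam * (\<Prod>j\<in>S. z j ^ a j)\<bar> = lam * (\<Prod>j\<in>S. \<bar>z j\<bar> ^ a j)"
    using assms by (simp add: abs_mult abs_prod power_abs)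
  have e2: "(lam * (\<Prod>j\<in>S. \<bar>z j\<bar> ^ a j)) powr s = lam powr s * (\<Prod>j\<in>S. \<bar>z j\<bar> ^ a j) powr s"
    using assms by (auto intro!: powr_mult prod_nonneg)
  have e3: "(\<Prod>j\<in>S. \<bar>z j\<bar> ^ a j) powr s = (\<Prod>j\<in>S. (\<bar>z j\<bar> ^ a j) powr s)"
    by (rule prod_powr_distrib)
  have e4: "(\<Prod>j\<in>S. (\<bar>z j\<bar> ^ a j) powr s) = (\<Prod>j\<in>S. \<bar>z j\<bar> powr (real (a j) * s))"
  proof (rule prod.cong[OF refl])
    fix j assume "j \<in> S"
    then have "\<bar>z j\<bar> > 0" using assms by auto
    then show "(\<bar>z j\<bar> ^ a j) powr s = \<bar>z j\<bar> powr (real (a j) * s)"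
      by (simp add: powr_realpow[symmetric] powr_powr)
  qed
  show ?thesis unfolding e1 e2 e3 e4 ..
qed

lemma inner_bound:
  fixes \<phi> :: "real^'n \<Rightarrow> complex" and \<alpha> :: "'n \<Rightarrow> nat" and x :: "real^'n \<Rightarrow> real"
  assumes sm: "smooth \<phi>" and ak: "\<alpha> k = d" and d: "d \<ge> 1" and lam: "lam > 0"
    and th: "0 \<le> \<theta>" "\<theta> \<le> 1" and A: "A > 0"
    and zero: "\<And>y. \<not> (\<forall>j. \<bar>y $ j\<bar> \<le> 1) \<Longrightarrow> \<phi> y = 0"
    and bA: "\<And>y. \<forall>j. \<bar>y $ j\<bar> \<le> 1 \<Longrightarrow> norm (\<phi> y) \<le> A"
    and bA': "\<And>y. \<forall>j. \<bar>y $ j\<bar> \<le> 1 \<Longrightarrow> norm (iter_dderiv [axis k 1] \<phi> y) \<le> A"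
  shows "ennreal (norm (\<integral>t. exp (\<i> * complex_of_real (lam * (\<Prod>j\<in>UNIV. ((\<Sum>b\<in>Basis. (x(axis k 1 := t)) b *\<^sub>R b) $ j) ^ \<alpha> j)))
              * \<phi> (\<Sum>b\<in>Basis. (x(axis k 1 := t)) b *\<^sub>R b) \<partial>lborel))
     \<le> ennreal (10 * A * lam powr (- \<theta> / real d)) * (\<Prod>j\<in>UNIV-{k}. gfun (real (\<alpha> j) * \<theta> / real d) (x (axis j 1)))"
    (is "ennreal (norm (integral\<^sup>L lborel ?F)) \<le> ?R")
proof -
  define y where "y = (\<lambda>t. \<Sum>b\<in>Basis. (x(axis k 1 := t)) b *\<^sub>R b)"
  have yj: "y t $ j = (if j = k then t else x (axis j 1))" for t j
    unfolding y_def by (rule coord_update)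
  define y0 where "y0 = y 0"
  have yl: "y t = y0 + t *\<^sub>R axis k 1" for t
    unfolding y0_def y_def by (rule line_eq)
  define c where "c = (\<Prod>j\<in>UNIV-{k}. (x (axis j 1)) ^ \<alpha> j)"
  have ph: "(\<Prod>j\<in>UNIV. (y t $ j) ^ \<alpha> j) = t ^ d * c" for t
  proof -
    have "(\<Prod>j\<in>UNIV. (y t $ j) ^ \<alpha> j) = (y t $ k) ^ \<alpha> k * (\<Prod>j\<in>UNIV-{k}. (y t $ j) ^ \<alpha> j)"
      by (rule prod.remove) auto
    also have "(\<Prod>j\<in>UNIV-{k}. (y t $ j) ^ \<alpha> j) = c"
      unfolding c_def by (rule prod.cong) (auto simp: yj)
    finally show ?thesis by (simp add: yj ak)
  qed
  have F_eq: "?F = (\<lambda>t. exp (\<i> * complex_of_real ((lam * c) * t ^ d)) * \<phi> (y0 + t *\<^sub>R axis k 1))"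
  proof -
    have yt: "(\<Sum>b\<in>Basis. (x(axis k 1 := t)) b *\<^sub>R b) = y t" for t by (simp add: y_def)
    show ?thesis by (rule ext) (simp only: yt ph yl[symmetric] mult_ac)
  qed
  have K0: "0 < 10 * A * lam powr (- \<theta> / real d)" using A lam by simp
  show ?thesis
  proof (cases "\<exists>j\<in>UNIV-{k}. \<bar>x (axis j 1)\<bar> > 1")
    case True
    then obtain j where j: "j \<noteq> k" "\<bar>x (axis j 1)\<bar> > 1" by auto
    have "\<phi> (y t) = 0" for t
    proof (rule zero)
      have "\<not> \<bar>y t $ j\<bar> \<le> 1" using j yj[of t j] by simp
      then show "\<not> (\<forall>j. \<bar>y t $ j\<bar> \<le> 1)" by blast
    qed
    then have "?F = (\<lambda>t. 0)" unfolding y_def by simp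
    then show ?thesis by simp
  next
    case False
    then have inb: "\<bar>x (axis j 1)\<bar> \<le> 1" if "j \<noteq> k" for j using that by (meson DiffI UNIV_I not_le singletonD)
    show ?thesis
    proof (cases "\<exists>j\<in>UNIV-{k}. x (axis j 1) = 0")
      case True
      have "(\<Prod>j\<in>UNIV-{k}. gfun (real (\<alpha> j) * \<theta> / real d) (x (axis j 1))) = top"
        unfolding ennreal_prod_eq_top using True inb gfun_nz by (auto simp: gfun_def)
      then have "?R = top" using K0 A lam by (simp add: ennreal_mult_top)
      then show ?thesis by simp
    next
      case False
      then have nz: "x (axis j 1) \<noteq> 0" if "j \<noteq> k" for j using that by (meson DiffI UNIV_I singletonD)
      define \<mu> where "\<mu> = lam * c"
      have cnz: "c \<noteq> 0" unfolding c_def using nz by (simp add: prod_zero_iff)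
      have mnz: "\<mu> \<noteq> 0" unfolding \<mu>_def using cnz lam by simp
      define \<psi> where "\<psi> = (\<lambda>t. \<phi> (y0 + t *\<^sub>R axis k 1))"
      define \<psi>' where "\<psi>' = (\<lambda>t. iter_dderiv [axis k 1] \<phi> (y0 + t *\<^sub>R axis k 1))"
      define f where "f = (\<lambda>t. exp (\<i> * complex_of_real (\<mu> * t ^ d)) * \<psi> t)"
      have Ff: "?F = f" unfolding F_eq f_def \<psi>_def \<mu>_def ..
      have inC: "\<forall>j. \<bar>(y0 + t *\<^sub>R axis k 1) $ j\<bar> \<le> 1" if "t \<in> {-1..1}" for t
        unfolding yl[symmetric] yj using that inb by auto
      have outC: "\<psi> t = 0" if "t \<notin> {-1..1}" for t
        unfolding \<psi>_def yl[symmetric]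
      proof (rule zero)
        have "\<not> \<bar>y t $ k\<bar> \<le> 1" using that yj[of t k] by auto
        then show "\<not> (\<forall>j. \<bar>y t $ j\<bar> \<le> 1)" by blast
      qed
      have der: "(\<psi> has_vector_derivative \<psi>' t) (at t)" for t
        unfolding \<psi>_def \<psi>'_def by (rule line_deriv[OF sm])
      have cont': "continuous_on {-1..1} \<psi>'"
        unfolding \<psi>'_def
        by (rule continuous_on_compose2[OF smooth_facts(3)[OF sm]]) (auto intro!: continuous_intros)
      have contpsi: "continuous_on UNIV \<psi>"
        unfolding \<psi>_def
        by (rule continuous_on_compose2[OF smooth_facts(1)[OF sm]]) (auto intro!: continuous_intros)
      have est: "norm (integral {-1..1} f) \<le> 10 * A * \<bar>\<mu>\<bar> powr (- \<theta> / real d)"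
        unfolding f_def
        by (rule full_estimate[OF d mnz th der cont']) (use inC bA bA' in \<open>auto simp: \<psi>_def \<psi>'_def\<close>)
      have contf: "continuous_on UNIV f" unfolding f_def by (intro continuous_intros contpsi)
      have f_ind: "f = (\<lambda>t. indicator {-1..1} t *\<^sub>R f t)"
        by (rule ext) (auto simp: indicator_def f_def outC)
      have intf: "integrable lborel f"
        by (subst f_ind) (rule borel_integrable_compact[OF compact_Icc continuous_on_subset[OF contf]], simp)
      have "integral\<^sup>L lborel f = integral UNIV f" using integral_lborel[OF intf] by simp
      also have "\<dots> = integral UNIV (\<lambda>t. if t \<in> {-1..1} then f t else 0)"
        by (rule arg_cong[where f="integral UNIV"]) (auto simp: f_def outC)
      also have "\<dots> = integral {-1..1} f" by (rule Henstock_Kurzweil_Integration.integral_restrict_UNIV)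
      finally have ieq: "integral\<^sup>L lborel f = integral {-1..1} f" .
      have pw: "\<bar>\<mu>\<bar> powr (- \<theta> / real d) = lam powr (- \<theta> / real d) * (\<Prod>j\<in>UNIV-{k}. \<bar>x (axis j 1)\<bar> powr (real (\<alpha> j) * (- \<theta> / real d)))"
        unfolding \<mu>_def c_def by (rule abs_prod_powr) (use nz lam in auto)
      have gf: "gfun (real (\<alpha> j) * \<theta> / real d) (x (axis j 1)) = ennreal (\<bar>x (axis j 1)\<bar> powr (real (\<alpha> j) * (- \<theta> / real d)))"
        if "j \<in> UNIV-{k}" for j
        using that nz inb unfolding gfun_def by auto
      have "ennreal (norm (integral\<^sup>L lborel ?F)) \<le> ennreal (10 * A * \<bar>\<mu>\<bar> powr (- \<theta> / real d))"
        unfolding Ff ieq using est by (rule ennreal_leI)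
      also have "\<dots> = ennreal (10 * A * lam powr (- \<theta> / real d)) * ennreal (\<Prod>j\<in>UNIV-{k}. \<bar>x (axis j 1)\<bar> powr (real (\<alpha> j) * (- \<theta> / real d)))"
      proof -
        have n1: "0 \<le> 10 * A * lam powr (- \<theta> / real d)" using A by simp
        have n2: "0 \<le> (\<Prod>j\<in>UNIV-{k}. \<bar>x (axis j 1)\<bar> powr (real (\<alpha> j) * (- \<theta> / real d)))" by (simp add: prod_nonneg)
        show ?thesis unfolding pw ennreal_mult[OF n1 n2, symmetric] by (simp add: mult.assoc)
      qed
      also have "\<dots> = ?R"
        by (simp add: prod_ennreal[symmetric] gf)
      finally show ?thesis .
    qed
  qed
qed



lemma lborel_to_PiM:
  fixes G :: "'a::euclidean_space \<Rightarrow> 'b::{banach, second_countable_topology}"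
  assumes int: "integrable lborel G"
  shows "integrable (Pi\<^sub>M Basis (\<lambda>_. lborel)) (\<lambda>x. G (\<Sum>b\<in>Basis. x b *\<^sub>R b))"
    and "integral\<^sup>L lborel G = integral\<^sup>L (Pi\<^sub>M Basis (\<lambda>_. lborel)) (\<lambda>x. G (\<Sum>b\<in>Basis. x b *\<^sub>R b))"
proof -
  have Gm: "G \<in> borel_measurable borel"
    using borel_measurable_integrable[OF int] by simp
  have Tm: "(\<lambda>x. \<Sum>b\<in>Basis. x b *\<^sub>R (b::'a)) \<in> measurable (Pi\<^sub>M Basis (\<lambda>_. lborel)) borel"
    by measurable
  have eq: "lborel = distr (Pi\<^sub>M Basis (\<lambda>_. lborel)) borel (\<lambda>x. \<Sum>b\<in>Basis. x b *\<^sub>R (b::'a))"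
    by (rule lborel_eq)
  show "integrable (Pi\<^sub>M Basis (\<lambda>_. lborel)) (\<lambda>x. G (\<Sum>b\<in>Basis. x b *\<^sub>R b))"
    using int unfolding eq by (subst (asm) integrable_distr_eq[OF Tm Gm])
  show "integral\<^sup>L lborel G = integral\<^sup>L (Pi\<^sub>M Basis (\<lambda>_. lborel)) (\<lambda>x. G (\<Sum>b\<in>Basis. x b *\<^sub>R b))"
    by (subst eq) (rule integral_distr[OF Tm Gm])
qed

definition idx :: "real^'n \<Rightarrow> 'n" where "idx b = (SOME j. b = axis j 1)"

lemma idx_axis[simp]: "idx (axis j 1 :: real^'n) = j"
  unfolding idx_def by (rule some_equality) (auto simp: axis_eq_axis)

lemma Basis_minus: "(Basis :: (real^'n) set) - {axis k 1} = (\<lambda>j. axis j 1) ` (UNIV - {k})"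
  unfolding Basis_cart_eq by (auto simp: axis_eq_axis)

lemma prod_reidx:
  fixes g :: "'n::finite \<Rightarrow> real \<Rightarrow> 'c::comm_monoid_mult"
  shows "(\<Prod>b\<in>(Basis :: (real^'n) set) - {axis k 1}. g (idx b) (x b)) = (\<Prod>j\<in>UNIV-{k}. g j (x (axis j 1)))"
  unfolding Basis_minus by (subst prod.reindex) (auto simp: inj_on_def axis_eq_axis)

theorem mainTheorem2:
  fixes \<alpha> :: "'n::finite \<Rightarrow> nat" and \<phi> :: "real^'n \<Rightarrow> complex"
  assumes pos: "\<forall>j. \<alpha> j > 0"
    and sm: "smooth \<phi>"
    and supp: "closure {x. \<phi> x \<noteq> 0} \<subseteq> {x. \<forall>j. \<bar>x $ j\<bar> \<le> 1}"
  shows "\<exists>C. \<forall>\<^sub>F lam in at_top.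
           norm (osc_integral \<alpha> \<phi> lam)
             \<le> C * lam powr (- 1 / real (Max (range \<alpha>)))
                 * ln lam ^ (card {j. \<alpha> j = Max (range \<alpha>)} - 1)"
proof -
  define d where "d = Max (range \<alpha>)"
  have "d \<in> range \<alpha>" unfolding d_def by (rule Max_in) auto
  then obtain k where ak: "\<alpha> k = d" by auto
  have d1: "d \<ge> 1" using pos[rule_format, of k] ak by simp
  have ale: "\<alpha> j \<le> d" for j unfolding d_def by (rule Max_ge) auto
  have zero: "\<phi> y = 0" if "\<not> (\<forall>j. \<bar>y $ j\<bar> \<le> 1)" for y
  proof (rule ccontr)
    assume "\<phi> y \<noteq> 0"
    then have "y \<in> closure {x. \<phi> x \<noteq> 0}" using closure_subset[of "{x. \<phi> x \<noteq> 0}"] by auto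
    then have "y \<in> {x. \<forall>j. \<bar>x $ j\<bar> \<le> 1}" using supp by (rule subsetD[rotated])
    then show False using that by simp
  qed
  define Cb :: "(real^'n) set" where "Cb = cbox (vec (-1)) (vec 1)"
  have Cb: "y \<in> Cb \<longleftrightarrow> (\<forall>j. \<bar>y $ j\<bar> \<le> 1)" for y
    unfolding Cb_def mem_box_cart by (auto simp: abs_le_iff)
  have cCb: "compact Cb" unfolding Cb_def by simp
  have "bounded (\<phi> ` Cb)"
    by (rule compact_imp_bounded, rule compact_continuous_image[OF continuous_on_subset[OF smooth_facts(1)[OF sm]] cCb]) simp
  then obtain A1 where A1: "A1 > 0" "\<And>y. y \<in> Cb \<Longrightarrow> norm (\<phi> y) \<le> A1"
    unfolding bounded_pos by auto
  have "bounded (iter_dderiv [axis k 1] \<phi> ` Cb)"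
    by (rule compact_imp_bounded, rule compact_continuous_image[OF continuous_on_subset[OF smooth_facts(3)[OF sm]] cCb]) simp
  then obtain A2 where A2: "A2 > 0" "\<And>y. y \<in> Cb \<Longrightarrow> norm (iter_dderiv [axis k 1] \<phi> y) \<le> A2"
    unfolding bounded_pos by auto
  define A where "A = max A1 A2"
  have A: "A > 0" using A1 unfolding A_def by simp
  have bA: "norm (\<phi> y) \<le> A" if "\<forall>j. \<bar>y $ j\<bar> \<le> 1" for y
    using A1(2)[of y] that Cb unfolding A_def by force
  have bA': "norm (iter_dderiv [axis k 1] \<phi> y) \<le> A" if "\<forall>j. \<bar>y $ j\<bar> \<le> 1" for y
    using A2(2)[of y] that Cb unfolding A_def by force
  define N where "N = card (UNIV - {k})"
  define Cst where "Cst = 10 * A * exp 1 * (2 * real d) ^ N"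
  have main: "norm (osc_integral \<alpha> \<phi> lam) \<le> Cst * lam powr (- 1 / real d) * ln lam ^ (card {j. \<alpha> j = d} - 1)"
    if lam: "lam \<ge> exp 1 + 1" for lam
  proof -
    have e1: "exp 1 < lam" using lam by simp
    have lam0: "lam > 0" using e1 exp_gt_zero[of 1] by linarith
    have L1: "ln lam > 1" using e1 lam0 by (metis ln_exp ln_less_cancel_iff exp_gt_zero)
    define \<theta> where "\<theta> = 1 - 1 / ln lam"
    have th: "0 \<le> \<theta>" "\<theta> \<le> 1" "\<theta> < 1" using L1 by (auto simp: \<theta>_def field_simps)
    define T where "T = (\<lambda>x::real^'n \<Rightarrow> real. \<Sum>b\<in>Basis. x b *\<^sub>R b)"
    define G where "G = (\<lambda>y::real^'n. exp (\<i> * complex_of_real (lam * (\<Prod>j\<in>UNIV. (y $ j) ^ \<alpha> j))) * \<phi> y)"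
    have contG: "continuous_on UNIV G" unfolding G_def
      by (intro continuous_intros smooth_facts(1)[OF sm])
    have G_ind: "G = (\<lambda>y. indicator Cb y *\<^sub>R G y)"
      by (rule ext) (auto simp: indicator_def G_def zero Cb)
    have intG: "integrable lborel G"
      by (subst G_ind) (rule borel_integrable_compact[OF cCb continuous_on_subset[OF contG]], simp)
    have o1: "osc_integral \<alpha> \<phi> lam = integral\<^sup>L lborel G"
      unfolding osc_integral_def G_def[symmetric] by (rule integral_lborel[OF intG])
    have intP: "integrable (Pi\<^sub>M Basis (\<lambda>_. lborel)) (\<lambda>x. G (T x))"
      and o2: "integral\<^sup>L lborel G = integral\<^sup>L (Pi\<^sub>M Basis (\<lambda>_. lborel)) (\<lambda>x. G (T x))"
      unfolding T_def by (rule lborel_to_PiM[OF intG])+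
    interpret P: product_sigma_finite "\<lambda>_::real^'n. lborel :: real measure"
      by standard
    define B' where "B' = (Basis :: (real^'n) set) - {axis k 1}"
    have Bi: "Basis = insert (axis k 1) B'" unfolding B'_def by auto
    have B'1: "axis k 1 \<notin> B'" "finite B'" unfolding B'_def by auto
    define inner where "inner = (\<lambda>x. \<integral>t. G (T (x(axis k 1 := t))) \<partial>lborel)"
    have o3: "integral\<^sup>L (Pi\<^sub>M Basis (\<lambda>_. lborel)) (\<lambda>x. G (T x)) = integral\<^sup>L (Pi\<^sub>M B' (\<lambda>_. lborel)) inner"
      unfolding inner_def using intP unfolding Bi by (rule P.product_integral_insert[OF B'1(2,1)])
    define \<beta> where "\<beta> = (\<lambda>j. real (\<alpha> j) * \<theta> / real d)"
    define K0 where "K0 = 10 * A * lam powr (- \<theta> / real d)"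
    have K0: "K0 > 0" unfolding K0_def using A lam0 by simp
    have ib: "ennreal (norm (inner x)) \<le> ennreal K0 * (\<Prod>b\<in>B'. gfun (\<beta> (idx b)) (x b))" for x
    proof -
      have "ennreal (norm (inner x)) \<le> ennreal K0 * (\<Prod>j\<in>UNIV-{k}. gfun (\<beta> j) (x (axis j 1)))"
        unfolding inner_def G_def T_def K0_def \<beta>_def
        by (rule inner_bound[where \<alpha>=\<alpha> and k=k and d=d and \<phi>=\<phi> and lam=lam and \<theta>=\<theta> and A=A, OF sm ak d1 lam0 th(1,2) A]) (use zero bA bA' in blast)+
      then show ?thesis unfolding B'_def prod_reidx[where g="\<lambda>j s. gfun (\<beta> j) s"] .
    qed
    have \<beta>b: "0 \<le> \<beta> j" "\<beta> j < 1" for j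
    proof -
      show "0 \<le> \<beta> j" unfolding \<beta>_def using th by simp
      have "real (\<alpha> j) * \<theta> \<le> real d * \<theta>" using ale[of j] th by (intro mult_right_mono) auto
      then have "\<beta> j \<le> \<theta>" unfolding \<beta>_def using d1 by (simp add: field_simps)
      then show "\<beta> j < 1" using th by simp
    qed
    have Ppos: "0 \<le> (\<Prod>j\<in>UNIV-{k}. 2 / (1 - \<beta> j))"
      using \<beta>b by (intro prod_nonneg) (auto simp: less_imp_le)
    have nnI: "(\<integral>\<^sup>+x. ennreal (norm (inner x)) \<partial>Pi\<^sub>M B' (\<lambda>_. lborel)) \<le> ennreal (K0 * (\<Prod>j\<in>UNIV-{k}. 2 / (1 - \<beta> j)))"
    proof -
      have "(\<integral>\<^sup>+x. ennreal (norm (inner x)) \<partial>Pi\<^sub>M B' (\<lambda>_. lborel))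
          \<le> (\<integral>\<^sup>+x. ennreal K0 * (\<Prod>b\<in>B'. gfun (\<beta> (idx b)) (x b)) \<partial>Pi\<^sub>M B' (\<lambda>_. lborel))"
        by (rule nn_integral_mono) (rule ib)
      also have "\<dots> = ennreal K0 * (\<integral>\<^sup>+x. (\<Prod>b\<in>B'. gfun (\<beta> (idx b)) (x b)) \<partial>Pi\<^sub>M B' (\<lambda>_. lborel))"
        by (rule nn_integral_cmult) measurable
      also have "(\<integral>\<^sup>+x. (\<Prod>b\<in>B'. gfun (\<beta> (idx b)) (x b)) \<partial>Pi\<^sub>M B' (\<lambda>_. lborel)) = (\<Prod>b\<in>B'. \<integral>\<^sup>+t. gfun (\<beta> (idx b)) t \<partial>lborel)"
        by (rule P.product_nn_integral_prod) (auto simp: B'1)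
      also have "\<dots> = (\<Prod>b\<in>B'. ennreal (2 / (1 - \<beta> (idx b))))"
        by (rule prod.cong[OF refl]) (simp add: gfun_integral \<beta>b)
      also have "\<dots> = (\<Prod>j\<in>UNIV-{k}. ennreal (2 / (1 - \<beta> j)))"
        unfolding B'_def prod_reidx[where g="\<lambda>j s. ennreal (2 / (1 - \<beta> j))" and x="\<lambda>_. 0"] ..
      also have "\<dots> = ennreal (\<Prod>j\<in>UNIV-{k}. 2 / (1 - \<beta> j))"
        using \<beta>b by (intro prod_ennreal) (auto simp: less_imp_le)
      also have "ennreal K0 * \<dots> = ennreal (K0 * (\<Prod>j\<in>UNIV-{k}. 2 / (1 - \<beta> j)))"
        using K0 Ppos by (simp add: ennreal_mult)
      finally show ?thesis .
    qed
    have normb: "norm (osc_integral \<alpha> \<phi> lam) \<le> K0 * (\<Prod>j\<in>UNIV-{k}. 2 / (1 - \<beta> j))"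
    proof (cases "integrable (Pi\<^sub>M B' (\<lambda>_. lborel)) inner")
      case True
      have "ennreal (norm (osc_integral \<alpha> \<phi> lam)) = ennreal (norm (integral\<^sup>L (Pi\<^sub>M B' (\<lambda>_. lborel)) inner))"
        using o1 o2 o3 by simp
      also have "\<dots> \<le> (\<integral>\<^sup>+x. ennreal (norm (inner x)) \<partial>Pi\<^sub>M B' (\<lambda>_. lborel))"
        by (rule integral_norm_bound_ennreal[OF True])
      also have "\<dots> \<le> ennreal (K0 * (\<Prod>j\<in>UNIV-{k}. 2 / (1 - \<beta> j)))" by (rule nnI)
      finally show ?thesis using K0 Ppos by (subst (asm) ennreal_le_iff) auto
    next
      case False
      then have "integral\<^sup>L (Pi\<^sub>M B' (\<lambda>_. lborel)) inner = 0" by (rule not_integrable_integral_eq)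
      then show ?thesis using o1 o2 o3 K0 Ppos by simp
    qed
    have fac: "2 / (1 - \<beta> j) \<le> 2 * real d * (if \<alpha> j = d then ln lam else 1)" for j
    proof (cases "\<alpha> j = d")
      case True
      then have "\<beta> j = \<theta>" unfolding \<beta>_def using d1 by simp
      then have "2 / (1 - \<beta> j) = 2 * ln lam" unfolding \<theta>_def using L1 by simp
      moreover have "2 * ln lam \<le> 2 * real d * ln lam" using d1 L1 by simp
      ultimately show ?thesis using True by simp
    next
      case False
      then have "\<alpha> j < d" using ale[of j] by simp
      then have aj: "real (\<alpha> j) \<le> real d - 1" by linarith
      have "\<beta> j \<le> real (\<alpha> j) / real d"
        unfolding \<beta>_def using th d1 by (intro divide_right_mono) (auto intro: mult_left_le)
      also have "\<dots> \<le> (real d - 1) / real d" using aj d1 by (intro divide_right_mono) auto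
      finally have "1 / real d \<le> 1 - \<beta> j" using d1 by (simp add: field_simps)
      then have "2 / (1 - \<beta> j) \<le> 2 / (1 / real d)"
        using d1 \<beta>b[of j] by (intro divide_left_mono) auto
      then show ?thesis using False by simp
    qed
    have P: "(\<Prod>j\<in>UNIV-{k}. 2 / (1 - \<beta> j)) \<le> (2 * real d) ^ N * ln lam ^ (card {j. \<alpha> j = d} - 1)"
    proof -
      have "(\<Prod>j\<in>UNIV-{k}. 2 / (1 - \<beta> j)) \<le> (\<Prod>j\<in>UNIV-{k}. 2 * real d * (if \<alpha> j = d then ln lam else 1))"
        by (rule prod_mono) (use fac \<beta>b in \<open>auto simp: less_imp_le\<close>)
      also have "\<dots> = (2 * real d) ^ N * (\<Prod>j\<in>UNIV-{k}. if \<alpha> j = d then ln lam else 1)"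
        by (simp add: prod.distrib N_def)
      also have "(\<Prod>j\<in>UNIV-{k}. if \<alpha> j = d then ln lam else 1) = (\<Prod>j\<in>{j\<in>UNIV-{k}. \<alpha> j = d}. ln lam)"
        by (rule prod.inter_filter[symmetric]) simp
      also have "\<dots> = ln lam ^ card {j\<in>UNIV-{k}. \<alpha> j = d}" by simp
      also have "{j\<in>UNIV-{k}. \<alpha> j = d} = {j. \<alpha> j = d} - {k}" by auto
      also have "card \<dots> = card {j. \<alpha> j = d} - 1" by (rule card_Diff_singleton) (auto simp: ak)
      finally show ?thesis .
    qed
    have K0b: "K0 \<le> 10 * A * exp 1 * lam powr (- 1 / real d)"
    proof -
      have eqt: "- \<theta> / real d = - 1 / real d + 1 / (real d * ln lam)"
        unfolding \<theta>_def using d1 L1 by (simp add: field_simps)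
      have "lam powr (- \<theta> / real d) = lam powr (- 1 / real d) * lam powr (1 / (real d * ln lam))"
        unfolding eqt by (rule powr_add)
      also have "lam powr (1 / (real d * ln lam)) = exp (1 / real d)"
        using lam0 L1 d1 by (auto simp: powr_def field_simps)
      also have "exp (1 / real d) \<le> exp 1" using d1 by simp
      finally have "lam powr (- \<theta> / real d) \<le> lam powr (- 1 / real d) * exp 1"
        by (simp add: mult_left_mono)
      then show ?thesis unfolding K0_def using A by (simp add: mult_left_mono mult_ac)
    qed
    have "norm (osc_integral \<alpha> \<phi> lam) \<le> K0 * (\<Prod>j\<in>UNIV-{k}. 2 / (1 - \<beta> j))" by (rule normb)
    also have "\<dots> \<le> (10 * A * exp 1 * lam powr (- 1 / real d)) * ((2 * real d) ^ N * ln lam ^ (card {j. \<alpha> j = d} - 1))"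
      using K0b P K0 Ppos by (intro mult_mono) auto
    also have "\<dots> = Cst * lam powr (- 1 / real d) * ln lam ^ (card {j. \<alpha> j = d} - 1)"
      unfolding Cst_def by (simp add: mult_ac)
    finally show ?thesis .
  qed
  show ?thesis unfolding d_def[symmetric]
    by (intro exI[of _ Cst] eventually_at_top_linorderI[of "exp 1 + 1"] main)
qed


end
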